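(* Consider the Geo/Geo/1/K queue described in the context and let the performance be the blocking indicator $Z_n=\mathbf 1\{X_n=K\}$ (an arrival in slot $n$ is blocked iff the queue is full). For an observed queue size $x\in\{0,\dots,K\}$ and lead time $L\ge0$, $$D_n(L)=\big|P^L(x,K)-\pi(K)\big|=\Big|\frac{2}{K+1}\beta^{\frac{K-x}{2}}\sum_{k=1}^K\frac{\gamma_k^L}{1-2\sqrt\beta\cos\frac{k\pi}{K+1}+\beta}\Big[\sin\tfrac{xk\pi}{K+1}-\sqrt\beta\sin\tfrac{(x+1)k\pi}{K+1}\Big]\sin\tfrac{Kk\pi}{K+1}\Big|,$$ where $\gamma_k=\alpha\mu+\bar\alpha\bar\mu+2\sqrt{\alpha\mu\bar\alpha\bar\mu}\cos\frac{k\pi}{K+1}$ and $\beta=\frac{\alpha\bar\mu}{\mu\bar\alpha}$.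
   Context: Geo/Geo/1/K queue: parameters $\alpha,\mu\in(0,1)$, $\bar\alpha=1-\alpha$, $\bar\mu=1-\mu$, buffer size $K\ge1$, with $\beta=\alpha\bar\mu/(\mu\bar\alpha)\ne1$. The queue size $(X_n)$ is a Markov chain on $\{0,\dots,K\}$ with $P(i,i+1)=\alpha\bar\mu$ for $0\le i\le K-1$; $P(i,i-1)=\mu\bar\alpha$ for $1\le i\le K$; $P(0,0)=1-\alpha\bar\mu$; $P(i,i)=\alpha\mu+\bar\alpha\bar\mu$ for $1\le i\le K-1$; $P(K,K)=1-\mu\bar\alpha$; all other entries $0$; $P^L$ is its $L$-th power. Its stationary distribution is $\pi(y)=\frac{1-\beta}{1-\beta^{K+1}}\beta^y$, and the chain is started in $\pi$. $\|p-q\|_{TV}=\frac12\sum_z|p(z)-q(z)|$; predictability $D_n(L)=\|\Pr(Z_{n+L}\in\cdot\mid X_n=x)-\Pr(Z_{n+L}\in\cdot)\|_{TV}$. *)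

theory Defs
  imports Complex_Main
begin

definition geoP :: "real \<Rightarrow> real \<Rightarrow> nat \<Rightarrow> nat \<Rightarrow> nat \<Rightarrow> real" where
  "geoP \<alpha> \<mu> K i j =
    (if i \<le> K \<and> j \<le> K then
       (if j = i + 1 then \<alpha> * (1 - \<mu>)
        else if i = j + 1 then \<mu> * (1 - \<alpha>)
        else if i = j then
          (if i = 0 then 1 - \<alpha> * (1 - \<mu>)
           else if i = K then 1 - \<mu> * (1 - \<alpha>)
           else \<alpha> * \<mu> + (1 - \<alpha>) * (1 - \<mu>))
        else 0)
     else 0)"

fun geoPpow :: "real \<Rightarrow> real \<Rightarrow> nat \<Rightarrow> nat \<Rightarrow> nat \<Rightarrow> nat \<Rightarrow> real" where
  "geoPpow \<alpha> \<mu> K 0 i j = (if i = j then 1 else 0)"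
| "geoPpow \<alpha> \<mu> K (Suc L) i j = (\<Sum>m\<le>K. geoPpow \<alpha> \<mu> K L i m * geoP \<alpha> \<mu> K m j)"

definition geo_beta :: "real \<Rightarrow> real \<Rightarrow> real" where
  "geo_beta \<alpha> \<mu> = \<alpha> * (1 - \<mu>) / (\<mu> * (1 - \<alpha>))"

definition geo_pi :: "real \<Rightarrow> real \<Rightarrow> nat \<Rightarrow> nat \<Rightarrow> real" where
  "geo_pi \<alpha> \<mu> K y = (1 - geo_beta \<alpha> \<mu>) / (1 - geo_beta \<alpha> \<mu> ^ (K + 1)) * geo_beta \<alpha> \<mu> ^ y"

definition block_ind :: "nat \<Rightarrow> nat \<Rightarrow> nat" where
  "block_ind K y = (if y = K then 1 else 0)"

definition cond_law_Z :: "real \<Rightarrow> real \<Rightarrow> nat \<Rightarrow> nat \<Rightarrow> nat \<Rightarrow> nat \<Rightarrow> real" where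
  "cond_law_Z \<alpha> \<mu> K L x z = (\<Sum>y\<in>{y. y \<le> K \<and> block_ind K y = z}. geoPpow \<alpha> \<mu> K L x y)"

text \<open>Pr(Z_m = z) when X_0 is distributed as pi: law of X_m is pi P^m.\<close>
definition law_Z :: "real \<Rightarrow> real \<Rightarrow> nat \<Rightarrow> nat \<Rightarrow> nat \<Rightarrow> real" where
  "law_Z \<alpha> \<mu> K m z = (\<Sum>y\<in>{y. y \<le> K \<and> block_ind K y = z}.
      \<Sum>w\<le>K. geo_pi \<alpha> \<mu> K w * geoPpow \<alpha> \<mu> K m w y)"

definition tv01 :: "(nat \<Rightarrow> real) \<Rightarrow> (nat \<Rightarrow> real) \<Rightarrow> real" where
  "tv01 p q = (1/2) * (\<Sum>z\<in>{0,1}. \<bar>p z - q z\<bar>)"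

definition predictability :: "real \<Rightarrow> real \<Rightarrow> nat \<Rightarrow> nat \<Rightarrow> nat \<Rightarrow> nat \<Rightarrow> real" where
  "predictability \<alpha> \<mu> K n L x = tv01 (cond_law_Z \<alpha> \<mu> K L x) (law_Z \<alpha> \<mu> K (n + L))"

end

theory Submission
  imports Defs
begin

lemma geoP_split:
  assumes "x \<le> K" "m \<le> K" "1 \<le> K"
  shows "geoP \<alpha> \<mu> K x m = (if m = x+1 then \<alpha>*(1-\<mu>) else 0) + (if m + 1 = x then \<mu>*(1-\<alpha>) else 0)
     + (if m = x then (if x = 0 then 1 - \<alpha> * (1 - \<mu>) else if x = K then 1 - \<mu> * (1 - \<alpha>) else \<alpha> * \<mu> + (1 - \<alpha>) * (1 - \<mu>)) else 0)"
  using assms unfolding geoP_def by auto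

lemma geoP_expand:
  assumes "x \<le> K" "1 \<le> K"
  shows "(\<Sum>m\<le>K. geoP \<alpha> \<mu> K x m * f m) = (if x < K then \<alpha>*(1-\<mu>) * f (x+1) else 0)
     + (if 0 < x then \<mu>*(1-\<alpha>) * f (x-1) else 0)
     + (if x = 0 then 1 - \<alpha> * (1 - \<mu>) else if x = K then 1 - \<mu> * (1 - \<alpha>) else \<alpha> * \<mu> + (1 - \<alpha>) * (1 - \<mu>)) * f x" (is "?L = ?R")
proof -
  have "(\<Sum>m\<le>K. geoP \<alpha> \<mu> K x m * f m) = (\<Sum>m\<le>K. (if m = x+1 then \<alpha>*(1-\<mu>) * f m else 0) + (if m = x - 1 \<and> 0 < x then \<mu>*(1-\<alpha>) * f m else 0)
     + (if m = x then (if x = 0 then 1 - \<alpha> * (1 - \<mu>) else if x = K then 1 - \<mu> * (1 - \<alpha>) else \<alpha> * \<mu> + (1 - \<alpha>) * (1 - \<mu>)) * f m else 0))"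
    apply (rule sum.cong[OF refl])
    apply (subst geoP_split) using assms by (auto simp: algebra_simps)
  also have "\<dots> = (\<Sum>m\<le>K. (if m = x+1 then \<alpha>*(1-\<mu>) * f m else 0)) + (\<Sum>m\<le>K. (if 0 < x then (if m = x - 1 then \<mu>*(1-\<alpha>) * f m else 0) else 0))
     + (\<Sum>m\<le>K. (if m = x then (if x = 0 then 1 - \<alpha> * (1 - \<mu>) else if x = K then 1 - \<mu> * (1 - \<alpha>) else \<alpha> * \<mu> + (1 - \<alpha>) * (1 - \<mu>)) * f m else 0))"
    unfolding sum.distrib by (intro arg_cong2[where f="(+)"] sum.cong) auto
  also have "\<dots> = ?R"
    using assms by (auto simp: sum.delta')
  finally show ?thesis .
qed
lemma geoP_rowsum:
  assumes "x \<le> K" "1 \<le> K"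
  shows "(\<Sum>m\<le>K. geoP \<alpha> \<mu> K x m) = 1"
  using geoP_expand[OF assms, of \<alpha> \<mu> "\<lambda>_. 1"] assms by (auto simp: algebra_simps)

lemma geoP_zero: "\<not> (i \<le> K \<and> j \<le> K) \<Longrightarrow> geoP \<alpha> \<mu> K i j = 0"
  unfolding geoP_def by auto

lemma sum_delta_l: "(\<Sum>m\<le>(K::nat). (if i = m then 1 else 0) * f m) = (if i \<le> K then f i else (0::real))"
proof -
  have "(\<Sum>m\<le>K. (if i = m then 1 else 0) * f m) = (\<Sum>m\<le>K. if i = m then f m else 0)"
    by (rule sum.cong) auto
  then show ?thesis by (simp add: sum.delta sum.delta')
qed

lemma sum_delta_r: "(\<Sum>m\<le>(K::nat). f m * (if m = j then 1 else 0)) = (if j \<le> K then f j else (0::real))"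
proof -
  have "(\<Sum>m\<le>K. f m * (if m = j then 1 else 0)) = (\<Sum>m\<le>K. if m = j then f m else 0)"
    by (rule sum.cong) auto
  then show ?thesis by (simp add: sum.delta sum.delta')
qed

lemma geoPpow_left: "geoPpow \<alpha> \<mu> K (Suc L) i j = (\<Sum>m\<le>K. geoP \<alpha> \<mu> K i m * geoPpow \<alpha> \<mu> K L m j)"
proof (induction L arbitrary: i j)
  case 0
  show ?case
  proof (cases "i \<le> K \<and> j \<le> K")
    case True then show ?thesis by (simp only: geoPpow.simps sum_delta_l sum_delta_r) (simp add: geoP_zero)?
  next
    case False then show ?thesis by (simp only: geoPpow.simps sum_delta_l sum_delta_r) (auto simp: geoP_zero)
  qed
next
  case (Suc L)
  have "geoPpow \<alpha> \<mu> K (Suc (Suc L)) i j = (\<Sum>m\<le>K. geoPpow \<alpha> \<mu> K (Suc L) i m * geoP \<alpha> \<mu> K m j)" by simp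
  also have "\<dots> = (\<Sum>m\<le>K. (\<Sum>n\<le>K. geoP \<alpha> \<mu> K i n * geoPpow \<alpha> \<mu> K L n m) * geoP \<alpha> \<mu> K m j)"
    using Suc.IH by simp
  also have "\<dots> = (\<Sum>n\<le>K. geoP \<alpha> \<mu> K i n * (\<Sum>m\<le>K. geoPpow \<alpha> \<mu> K L n m * geoP \<alpha> \<mu> K m j))"
    unfolding sum_distrib_left sum_distrib_right mult.assoc by (rule sum.swap)
  finally show ?case by simp
qed

lemma geoPpow_rowsum:
  assumes "x \<le> K" "1 \<le> K"
  shows "(\<Sum>y\<le>K. geoPpow \<alpha> \<mu> K L x y) = 1"
proof (induction L)
  case 0 then show ?case using assms by simp
next
  case (Suc L)
  have "(\<Sum>y\<le>K. geoPpow \<alpha> \<mu> K (Suc L) x y) = (\<Sum>m\<le>K. geoPpow \<alpha> \<mu> K L x m * (\<Sum>y\<le>K. geoP \<alpha> \<mu> K m y))"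
    unfolding geoPpow.simps sum_distrib_left by (rule sum.swap)
  also have "\<dots> = (\<Sum>m\<le>K. geoPpow \<alpha> \<mu> K L x m)"
    using geoP_rowsum assms by (intro sum.cong) auto
  finally show ?case using Suc by simp
qed

lemma detailed_balance:
  assumes "\<mu> * (1 - \<alpha>) \<noteq> 0"
  shows "geo_beta \<alpha> \<mu> ^ n * geoP \<alpha> \<mu> K n y = geo_beta \<alpha> \<mu> ^ y * geoP \<alpha> \<mu> K y n"
proof -
  have b: "geo_beta \<alpha> \<mu> * (\<mu> * (1 - \<alpha>)) = \<alpha> * (1 - \<mu>)"
    using assms unfolding geo_beta_def by simp
  show ?thesis
    unfolding geoP_def using b by (cases "n = y+1"; cases "y = n+1"; simp add: algebra_simps)
qed

lemma geo_stationary: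
  assumes "\<mu> * (1 - \<alpha>) \<noteq> 0" "y \<le> K" "1 \<le> K"
  shows "(\<Sum>w\<le>K. geo_pi \<alpha> \<mu> K w * geoPpow \<alpha> \<mu> K m w y) = geo_pi \<alpha> \<mu> K y"
  using assms(2)
proof (induction m arbitrary: y)
  case 0 then show ?case by (simp only: geoPpow.simps sum_delta_r) simp
next
  case (Suc m)
  define C where "C = (1 - geo_beta \<alpha> \<mu>) / (1 - geo_beta \<alpha> \<mu> ^ (K + 1))"
  have pi: "\<And>w. geo_pi \<alpha> \<mu> K w = C * geo_beta \<alpha> \<mu> ^ w" unfolding geo_pi_def C_def by simp
  have "(\<Sum>w\<le>K. geo_pi \<alpha> \<mu> K w * geoPpow \<alpha> \<mu> K (Suc m) w y)
     = (\<Sum>n\<le>K. (\<Sum>w\<le>K. geo_pi \<alpha> \<mu> K w * geoPpow \<alpha> \<mu> K m w n) * geoP \<alpha> \<mu> K n y)"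
    unfolding geoPpow.simps sum_distrib_left sum_distrib_right mult.assoc by (rule sum.swap)
  also have "\<dots> = (\<Sum>n\<le>K. geo_pi \<alpha> \<mu> K n * geoP \<alpha> \<mu> K n y)"
    using Suc.IH by (intro sum.cong) auto
  also have "\<dots> = (\<Sum>n\<le>K. C * (geo_beta \<alpha> \<mu> ^ y * geoP \<alpha> \<mu> K y n))"
    unfolding pi mult.assoc detailed_balance[OF assms(1)] ..
  also have "\<dots> = C * geo_beta \<alpha> \<mu> ^ y * (\<Sum>n\<le>K. geoP \<alpha> \<mu> K y n)"
    by (simp add: sum_distrib_left mult.assoc)
  also have "\<dots> = geo_pi \<alpha> \<mu> K y" using geoP_rowsum[OF Suc.prems assms(3)] pi by simp
  finally show ?case .
qed

lemma beta_pos: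
  assumes "0 < \<alpha>" "\<alpha> < 1" "0 < \<mu>" "\<mu> < 1"
  shows "geo_beta \<alpha> \<mu> > 0"
  unfolding geo_beta_def using assms by (simp add: divide_pos_pos)

lemma geo_pi_sum:
  assumes "0 < \<alpha>" "\<alpha> < 1" "0 < \<mu>" "\<mu> < 1" "geo_beta \<alpha> \<mu> \<noteq> 1"
  shows "(\<Sum>y\<le>K. geo_pi \<alpha> \<mu> K y) = 1"
proof -
  define b where "b = geo_beta \<alpha> \<mu>"
  have bp: "b > 0" using beta_pos assms unfolding b_def by blast
  have b1: "b \<noteq> 1" using assms(5) unfolding b_def .
  have bK: "b ^ (K+1) \<noteq> 1"
  proof (cases "b < 1")
    case True
    then have "b ^ (K+1) < 1" using bp by (intro power_less_one_iff[THEN iffD2]) auto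
    then show ?thesis by simp
  next
    case False
    then have "1 < b" using b1 by simp
    then have "1 < b ^ (K+1)" by (rule one_less_power) simp
    then show ?thesis by simp
  qed
  have gs: "(\<Sum>y\<le>K. b ^ y) = (1 - b ^ (K+1)) / (1 - b)"
    using sum_gp_strict[of b "K+1"] b1 lessThan_Suc_atMost by simp
  have "(\<Sum>y\<le>K. geo_pi \<alpha> \<mu> K y) = (1 - b) / (1 - b ^ (K + 1)) * (\<Sum>y\<le>K. b ^ y)"
    unfolding geo_pi_def b_def[symmetric] by (simp add: sum_distrib_left)
  also have "\<dots> = 1" unfolding gs using bK b1 by simp
  finally show ?thesis .
qed

lemma part1:
  assumes "0 < \<alpha>" "\<alpha> < 1" "0 < \<mu>" "\<mu> < 1" "1 \<le> K"
    and "geo_beta \<alpha> \<mu> \<noteq> 1" and "x \<le> K"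
  shows "predictability \<alpha> \<mu> K n L x = \<bar>geoPpow \<alpha> \<mu> K L x K - geo_pi \<alpha> \<mu> K K\<bar>"
proof -
  have nz: "\<mu> * (1 - \<alpha>) \<noteq> 0" using assms by simp
  have S1: "{y. y \<le> K \<and> block_ind K y = 1} = {K}" unfolding block_ind_def by auto
  have S0: "{y. y \<le> K \<and> block_ind K y = 0} = {..<K}" unfolding block_ind_def by auto
  have r: "(\<Sum>y<K. geoPpow \<alpha> \<mu> K L x y) = 1 - geoPpow \<alpha> \<mu> K L x K"
    using geoPpow_rowsum[OF assms(7,5), of \<alpha> \<mu> L] by (simp add: lessThan_Suc_atMost[symmetric])
  have p: "(\<Sum>y<K. geo_pi \<alpha> \<mu> K y) = 1 - geo_pi \<alpha> \<mu> K K"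
    using geo_pi_sum[OF assms(1-4,6), of K] by (simp add: lessThan_Suc_atMost[symmetric])
  have st: "\<And>y. y \<le> K \<Longrightarrow> (\<Sum>w\<le>K. geo_pi \<alpha> \<mu> K w * geoPpow \<alpha> \<mu> K (n+L) w y) = geo_pi \<alpha> \<mu> K y"
    using geo_stationary[OF nz _ assms(5)] by blast
  have l0: "law_Z \<alpha> \<mu> K (n + L) 0 = 1 - geo_pi \<alpha> \<mu> K K"
    unfolding law_Z_def S0 using st p by simp
  have l1: "law_Z \<alpha> \<mu> K (n + L) 1 = geo_pi \<alpha> \<mu> K K"
    unfolding law_Z_def S1 using st by simp
  have c0: "cond_law_Z \<alpha> \<mu> K L x 0 = 1 - geoPpow \<alpha> \<mu> K L x K"
    unfolding cond_law_Z_def S0 using r by simp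
  have c1: "cond_law_Z \<alpha> \<mu> K L x 1 = geoPpow \<alpha> \<mu> K L x K"
    unfolding cond_law_Z_def S1 by simp
  show ?thesis unfolding predictability_def tv01_def using l0 l1 c0 c1 by simp
qed





lemma cos_sum_tele:
  fixes \<phi> :: real
  shows "2 * sin (\<phi>/2) * (\<Sum>k=1..n. cos (real k * \<phi>)) = sin ((real n + 1/2) * \<phi>) - sin (\<phi>/2)"
proof (induction n)
  case 0 then show ?case by simp
next
  case (Suc n)
  have e: "2 * sin (\<phi>/2) * cos (real (Suc n) * \<phi>) = sin ((real (Suc n) + 1/2) * \<phi>) - sin ((real n + 1/2) * \<phi>)"
  proof -
    have a: "(real (Suc n) + 1/2) * \<phi> = real (Suc n) * \<phi> + \<phi>/2" by (simp add: algebra_simps)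
    have b: "(real n + 1/2) * \<phi> = real (Suc n) * \<phi> - \<phi>/2" by (simp add: algebra_simps)
    show ?thesis unfolding a b sin_add sin_diff by simp
  qed
  show ?case using Suc e by (simp add: distrib_left)
qed

lemma cos_sum_roots:
  fixes K j :: nat
  assumes "0 < j" "j < 2 * (K + 1)"
  shows "(\<Sum>k=1..K. cos (real j * (real k * pi / real (K + 1)))) = - (1 + (-1) ^ j) / 2"
proof -
  define \<phi> where "\<phi> = real j * pi / real (K + 1)"
  have eq: "\<And>k. real j * (real k * pi / real (K + 1)) = real k * \<phi>" unfolding \<phi>_def by simp
  have s0: "sin (\<phi>/2) > 0"
  proof (rule sin_gt_zero)
    show "0 < \<phi>/2" unfolding \<phi>_def using assms by simp
    have "real j < 2 * real (K+1)" using assms by linarith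
    then have "real j * pi < 2 * real (K+1) * pi" by simp
    then show "\<phi>/2 < pi" unfolding \<phi>_def by (simp add: field_simps)
  qed
  have "(real K + 1/2) * \<phi> = real j * pi - \<phi>/2" unfolding \<phi>_def by (simp add: field_simps)
  then have "sin ((real K + 1/2) * \<phi>) = - ((-1)^j * sin (\<phi>/2))"
    by (simp add: sin_diff)
  then have "2 * sin (\<phi>/2) * (\<Sum>k=1..K. cos (real k * \<phi>)) = - (1 + (-1)^j) * sin (\<phi>/2)"
    using cos_sum_tele[of \<phi> K] by (simp add: algebra_simps)
  then have "sin (\<phi>/2) * (2 * (\<Sum>k=1..K. cos (real k * \<phi>)) + (1 + (-1)^j)) = 0"
    by (simp add: algebra_simps)
  then have "2 * (\<Sum>k=1..K. cos (real k * \<phi>)) + (1 + (-1)^j) = 0" using s0 by simp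
  then show ?thesis unfolding eq by (simp add: field_simps)
qed

lemma sin_orth:
  fixes K x :: nat
  assumes "1 \<le> x" "x \<le> K"
  shows "(\<Sum>k=1..K. sin (real x * real k * pi / real (K + 1)) * sin (real K * real k * pi / real (K + 1)))
       = (if x = K then real (K + 1) / 2 else 0)"
proof -
  define th where "th k = real k * pi / real (K + 1)" for k :: nat
  have e: "sin (real x * real k * pi / real (K + 1)) * sin (real K * real k * pi / real (K + 1))
     = (cos (real (K - x) * th k) - cos (real (K + x) * th k)) / 2" for k
  proof -
    have a: "real (K - x) * th k = real K * th k - real x * th k" using assms by (simp add: of_nat_diff algebra_simps)
    have b: "real (K + x) * th k = real K * th k + real x * th k" by (simp add: algebra_simps)
    have c: "real x * real k * pi / real (K + 1) = real x * th k" "real K * real k * pi / real (K + 1) = real K * th k"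
      unfolding th_def by simp_all
    show ?thesis unfolding a b c cos_add cos_diff by simp
  qed
  have s2: "(\<Sum>k=1..K. cos (real (K + x) * th k)) = - (1 + (-1) ^ (K+x)) / 2"
    unfolding th_def using cos_sum_roots[of "K+x" K] assms by simp
  show ?thesis
  proof (cases "x = K")
    case True
    have "(\<Sum>k=1..K. cos (real (K - x) * th k)) = real K" using True by simp
    moreover have "(-1::real) ^ (K + x) = 1" using True by (simp add: mult_2[symmetric])
    ultimately show ?thesis unfolding e sum_divide_distrib[symmetric] sum_subtractf using s2 True by simp
  next
    case False
    have s1: "(\<Sum>k=1..K. cos (real (K - x) * th k)) = - (1 + (-1) ^ (K-x)) / 2"
      unfolding th_def using cos_sum_roots[of "K-x" K] assms False by simp
    have "(-1::real) ^ (K + x) = (-1) ^ (K - x)"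
    proof -
      obtain d where d: "K = x + d" using assms le_Suc_ex by blast
      have "K + x = d + 2 * x" "K - x = d" using d by simp_all
      then show ?thesis by (simp add: power_add power_mult)
    qed
    then show ?thesis unfolding e sum_divide_distrib[symmetric] sum_subtractf using s1 s2 False by simp
  qed
qed




lemma sin_three: "sin (((y::real) + 1) * \<theta>) + sin ((y - 1) * \<theta>) = 2 * cos \<theta> * sin (y * \<theta>)"
  by (simp add: distrib_right left_diff_distrib sin_add sin_diff)

lemma eig:
  fixes \<alpha> \<mu> s \<theta> :: real and K x :: nat
  assumes K: "1 \<le> K" and x: "x \<le> K" and z: "sin ((real K + 1) * \<theta>) = 0"
    and a: "\<alpha> * (1 - \<mu>) = \<mu> * (1 - \<alpha>) * s^2"
  shows "(\<Sum>m\<le>K. geoP \<alpha> \<mu> K x m * (s^(K-m) * (sin (real m * \<theta>) - s * sin ((real m + 1) * \<theta>))))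
     = (\<alpha> * \<mu> + (1 - \<alpha>) * (1 - \<mu>) + 2 * (\<mu> * (1 - \<alpha>) * s) * cos \<theta>)
        * (s^(K-x) * (sin (real x * \<theta>) - s * sin ((real x + 1) * \<theta>)))"
  (is "?L = ?R")
proof -
  define q where "q = \<mu> * (1 - \<alpha>)"
  define c where "c = cos \<theta>"
  have a': "\<alpha> * (1 - \<mu>) = q * s^2" using a q_def by simp
  have g: "\<alpha> * \<mu> + (1 - \<alpha>) * (1 - \<mu>) = 1 - \<alpha> * (1 - \<mu>) - q" unfolding q_def by (simp add: algebra_simps)
  let ?v = "\<lambda>m. s^(K-m) * (sin (real m * \<theta>) - s * sin ((real m + 1) * \<theta>))"
  have L: "?L = (if x < K then \<alpha>*(1-\<mu>) * ?v (x+1) else 0)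
     + (if 0 < x then \<mu>*(1-\<alpha>) * ?v (x-1) else 0)
     + (if x = 0 then 1 - \<alpha> * (1 - \<mu>) else if x = K then 1 - \<mu> * (1 - \<alpha>) else \<alpha> * \<mu> + (1 - \<alpha>) * (1 - \<mu>)) * ?v x"
    by (rule geoP_expand[OF x K])
  consider (zero) "x = 0" | (top) "x = K" | (mid) "0 < x" "x < K" using x K by linarith
  then show ?thesis
  proof cases
    case zero
    define P where "P = s^(K-1)"
    have pw: "s^K = s * P" "s^(K - Suc 0) = P" unfolding P_def using K
      by (simp_all add: power_Suc[symmetric] del: power_Suc)
    have I: "sin (2 * \<theta>) = 2 * c * sin \<theta>" unfolding c_def by (simp add: sin_double)
    show ?thesis unfolding L using zero K
      apply (simp add: pw a' g q_def[symmetric] c_def[symmetric])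
      using I by (simp add: algebra_simps power2_eq_square)
  next
    case top
    define Y where "Y = real K - 1"
    have RK: "real K = Y + 1" "real (K - 1) = Y" using K unfolding Y_def by (simp_all add: of_nat_diff)
    have pw: "s^(K-K) = 1" "s^(K-(K-1)) = s" using K by simp_all
    have I: "sin ((Y + 1 + 1) * \<theta>) + sin (Y * \<theta>) = 2 * c * sin ((Y+1) * \<theta>)"
      using sin_three[of "Y+1" \<theta>] unfolding c_def by simp
    have z': "sin ((Y + 1 + 1) * \<theta>) = 0" using z RK by simp
    show ?thesis unfolding L using top K
      apply (simp add: pw a' g q_def[symmetric] c_def[symmetric] RK)
      using I z' by (simp add: algebra_simps power2_eq_square)
  next
    case mid
    define P where "P = s^(K-(x+1))"
    have d1: "K - x = Suc (K - Suc x)" "K - (x-1) = Suc (Suc (K - Suc x))" "Suc K - x = Suc (Suc (K - Suc x))"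
      using mid by arith+
    have pw: "s^(K-x) = s * P" "s^(K-(x-1)) = s * s * P" "s^(Suc K - x) = s * s * P" "s^(K - Suc x) = P"
      unfolding P_def d1 by simp_all
    define Y where "Y = real x"
    have RX: "real (x+1) = Y + 1" "real (x - 1) = Y - 1" "real x = Y" using mid unfolding Y_def by (simp_all add: of_nat_diff)
    have I1: "sin ((Y + 1) * \<theta>) + sin ((Y - 1) * \<theta>) = 2 * c * sin (Y * \<theta>)"
      using sin_three[of Y \<theta>] unfolding c_def by simp
    have I2: "sin ((Y + 1 + 1) * \<theta>) + sin (Y * \<theta>) = 2 * c * sin ((Y+1) * \<theta>)"
      using sin_three[of "Y+1" \<theta>] unfolding c_def by simp
    have e: "Y - 1 + 1 = Y" by simp
    show ?thesis unfolding L using mid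
      apply (simp add: pw a' g q_def[symmetric] c_def[symmetric] RX e)
      using I1 I2 apply (simp add: algebra_simps power2_eq_square)
      by algebra
  qed
qed




definition th :: "nat \<Rightarrow> nat \<Rightarrow> real" where "th K k = real k * pi / real (K + 1)"
definition uu :: "real \<Rightarrow> nat \<Rightarrow> nat \<Rightarrow> nat \<Rightarrow> real" where
  "uu s K k y = sin (real y * th K k) - s * sin ((real y + 1) * th K k)"
definition NN :: "real \<Rightarrow> nat \<Rightarrow> nat \<Rightarrow> real" where
  "NN s K k = 1 - 2 * s * cos (th K k) + s^2"
definition GG :: "real \<Rightarrow> nat \<Rightarrow> nat \<Rightarrow> real" where
  "GG s K y = 2 / real (K + 1) * (\<Sum>k=1..K. uu s K k y * sin (real K * th K k) / NN s K k)"

lemma th_sin_pos: "1 \<le> k \<Longrightarrow> k \<le> K \<Longrightarrow> sin (th K k) > 0"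
  unfolding th_def
proof (rule sin_gt_zero)
  assume "1 \<le> k" "k \<le> K"
  then show "0 < real k * pi / real (K + 1)" by simp
  have "real k < real (K+1)" using \<open>k \<le> K\<close> by simp
  then have "real k * pi < real (K+1) * pi" by simp
  then show "real k * pi / real (K + 1) < pi" by (simp add: field_simps)
qed

lemma th_end: "sin ((real K + 1) * th K k) = 0"
proof -
  have "(real K + 1) * th K k = real k * pi" unfolding th_def by (simp add: field_simps)
  then show ?thesis by simp
qed

lemma NN_pos: "1 \<le> k \<Longrightarrow> k \<le> K \<Longrightarrow> NN s K k > 0"
proof -
  assume "1 \<le> k" "k \<le> K"
  then have sp: "sin (th K k) > 0" by (rule th_sin_pos)
  have "NN s K k = (s - cos (th K k))^2 + (sin (th K k))^2"
    unfolding NN_def using sin_cos_squared_add[of "th K k"] by (simp add: power2_eq_square algebra_simps)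
  then show ?thesis using sp by (simp add: add_nonneg_pos)
qed

lemma uu_rec: "1 \<le> y \<Longrightarrow> uu s K k y - s * uu s K k (y - 1) = NN s K k * sin (real y * th K k)"
proof -
  assume y: "1 \<le> y"
  define Y where "Y = real y"
  have r: "real (y - 1) = Y - 1" "real (y-1) + 1 = Y" using y unfolding Y_def by (simp_all add: of_nat_diff)
  have I: "sin ((Y + 1) * th K k) + sin ((Y - 1) * th K k) = 2 * cos (th K k) * sin (Y * th K k)"
    by (rule sin_three)
  show ?thesis unfolding uu_def NN_def r Y_def[symmetric]
    using I apply (simp add: algebra_simps power2_eq_square)
    by algebra
qed

lemma GG_rec:
  assumes "1 \<le> y" "y \<le> K"
  shows "GG s K y - s * GG s K (y - 1) = (if y = K then 1 else 0)"
proof -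
  have "GG s K y - s * GG s K (y - 1)
     = 2 / real (K + 1) * (\<Sum>k=1..K. (uu s K k y - s * uu s K k (y - 1)) * sin (real K * th K k) / NN s K k)"
  proof -
    have "(\<Sum>k=1..K. (uu s K k y - s * uu s K k (y - 1)) * sin (real K * th K k) / NN s K k)
       = (\<Sum>k=1..K. uu s K k y * sin (real K * th K k) / NN s K k) - s * (\<Sum>k=1..K. uu s K k (y - 1) * sin (real K * th K k) / NN s K k)"
      unfolding sum_distrib_left sum_subtractf[symmetric]
      by (rule sum.cong[OF refl]) (simp add: left_diff_distrib diff_divide_distrib)
    then show ?thesis unfolding GG_def by (simp add: right_diff_distrib)
  qed
  also have "\<dots> = 2 / real (K + 1) * (\<Sum>k=1..K. sin (real y * real k * pi / real (K + 1)) * sin (real K * real k * pi / real (K + 1)))"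
  proof -
    have "\<And>k. k \<in> {1..K} \<Longrightarrow> (uu s K k y - s * uu s K k (y - 1)) * sin (real K * th K k) / NN s K k
       = sin (real y * real k * pi / real (K + 1)) * sin (real K * real k * pi / real (K + 1))"
    proof -
      fix k assume "k \<in> {1..K}"
      then have "NN s K k > 0" using NN_pos by auto
      then show "(uu s K k y - s * uu s K k (y - 1)) * sin (real K * th K k) / NN s K k
       = sin (real y * real k * pi / real (K + 1)) * sin (real K * real k * pi / real (K + 1))"
        unfolding uu_rec[OF assms(1)] th_def by (simp add: mult.assoc)
    qed
    then have "(\<Sum>k=1..K. (uu s K k y - s * uu s K k (y - 1)) * sin (real K * th K k) / NN s K k)
       = (\<Sum>k=1..K. sin (real y * real k * pi / real (K + 1)) * sin (real K * real k * pi / real (K + 1)))"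
      by (rule sum.cong[OF refl])
    then show ?thesis by simp
  qed
  also have "\<dots> = (if y = K then 1 else 0)" unfolding sin_orth[OF assms] by simp
  finally show ?thesis .
qed

lemma GG_closed: "y \<le> K \<Longrightarrow> 1 \<le> K \<Longrightarrow> GG s K y = s^y * GG s K 0 + (if y = K then 1 else 0)"
proof (induction y)
  case 0 then show ?case by simp
next
  case (Suc y)
  have r: "GG s K (Suc y) - s * GG s K y = (if Suc y = K then 1 else 0)"
    using GG_rec[of "Suc y" K s] Suc.prems by simp
  have ih: "GG s K y = s^y * GG s K 0" using Suc.IH Suc.prems by simp
  show ?case using r ih by (simp add: algebra_simps)
qed

lemma tele: "(\<Sum>y\<le>n. s^y * (sin (real y * \<theta>) - s * sin ((real y + 1) * \<theta>))) = - ((s::real)^(n+1) * sin ((real n + 1) * \<theta>))"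
proof (induction n)
  case 0 then show ?case by simp
next
  case (Suc n)
  have "(\<Sum>y\<le>Suc n. s^y * (sin (real y * \<theta>) - s * sin ((real y + 1) * \<theta>)))
     = - (s^(n+1) * sin ((real n + 1) * \<theta>)) + s^(Suc n) * (sin (real (Suc n) * \<theta>) - s * sin ((real (Suc n) + 1) * \<theta>))"
    using Suc by simp
  also have "\<dots> = - (s^(Suc n+1) * sin ((real (Suc n) + 1) * \<theta>))"
    by (simp add: algebra_simps)
  finally show ?case .
qed

lemma GG_weighted: "(\<Sum>y\<le>K. s^y * GG s K y) = 0"
proof -
  have z: "(\<Sum>y\<le>K. s^y * uu s K k y) = 0" for k
    unfolding uu_def tele th_end by simp
  have "(\<Sum>y\<le>K. s^y * GG s K y) = (\<Sum>y\<le>K. \<Sum>k=1..K. 2 / real (K + 1) * (sin (real K * th K k) / NN s K k) * (s^y * uu s K k y))"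
    unfolding GG_def sum_distrib_left
    by (rule sum.cong[OF refl], rule sum.cong[OF refl]) (simp add: algebra_simps)
  also have "\<dots> = (\<Sum>k=1..K. \<Sum>y\<le>K. 2 / real (K + 1) * (sin (real K * th K k) / NN s K k) * (s^y * uu s K k y))"
    by (rule sum.swap)
  also have "\<dots> = (\<Sum>k=1..K. 2 / real (K + 1) * (sin (real K * th K k) / NN s K k) * (\<Sum>y\<le>K. s^y * uu s K k y))"
    by (simp only: sum_distrib_left)
  also have "\<dots> = 0" unfolding z by simp
  finally show ?thesis .
qed

lemma GG0:
  assumes "1 \<le> K"
  shows "GG s K 0 = - (s^K) / (\<Sum>i\<le>K. (s^2)^i)"
proof -
  have Zp: "(\<Sum>i\<le>K. (s^2)^i) > 0"
  proof -
    have "(s^2)^0 \<le> (\<Sum>i\<le>K. (s^2)^i)"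
      by (rule member_le_sum) auto
    then show ?thesis by simp
  qed
  have "0 = (\<Sum>y\<le>K. s^y * GG s K y)" using GG_weighted by simp
  also have "\<dots> = (\<Sum>y\<le>K. s^y * (s^y * GG s K 0 + (if y = K then 1 else 0)))"
  proof (rule sum.cong[OF refl])
    fix y assume "y \<in> {..K}"
    then have "GG s K y = s^y * GG s K 0 + (if y = K then 1 else 0)"
      using assms by (intro GG_closed) auto
    then show "s^y * GG s K y = s^y * (s^y * GG s K 0 + (if y = K then 1 else 0))" by simp
  qed
  also have "\<dots> = (\<Sum>y\<le>K. GG s K 0 * (s^2)^y + (if y = K then s^K else 0))"
  proof (rule sum.cong)
    fix y
    have "(s^2)^y = s^y * s^y" by (simp add: power2_eq_square power_mult_distrib)
    then show "s^y * (s^y * GG s K 0 + (if y = K then 1 else 0)) = GG s K 0 * (s^2)^y + (if y = K then s^K else 0)"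
      by (simp add: algebra_simps)
  qed simp
  also have "\<dots> = GG s K 0 * (\<Sum>y\<le>K. (s^2)^y) + s^K"
    by (simp add: sum.distrib sum_distrib_left)
  finally have "GG s K 0 * (\<Sum>y\<le>K. (s^2)^y) = - (s^K)" by simp
  then show ?thesis using Zp by (simp add: field_simps)
qed

lemma base_ident:
  assumes "1 \<le> K" "y \<le> K"
  shows "s^(K-y) * GG s K y = (if y = K then 1 else 0) - (s^2)^K / (\<Sum>i\<le>K. (s^2)^i)"
proof -
  have "s^(K-y) * GG s K y = s^(K-y) * s^y * GG s K 0 + (if y = K then 1 else 0)"
    using GG_closed[OF assms(2,1), of s] by (simp add: algebra_simps)
  also have "s^(K-y) * s^y = s^K" using assms by (simp add: power_add[symmetric])
  finally show ?thesis unfolding GG0[OF assms(1)] by (simp add: power_mult_distrib power2_eq_square power_mult[symmetric])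
qed



lemma sqrt_pow_powr:
  assumes "b > (0::real)"
  shows "sqrt b ^ n = b powr (real n / 2)"
proof -
  have "sqrt b = b powr (1/2)" using assms by (simp add: powr_half_sqrt)
  then have "sqrt b ^ n = (b powr (1/2)) powr real n" using assms by (simp add: powr_realpow)
  also have "\<dots> = b powr (real n / 2)" by (simp add: powr_powr)
  finally show ?thesis .
qed

theorem proposition2:
  fixes \<alpha> \<mu> :: real and K n L x :: nat
  assumes "0 < \<alpha>" "\<alpha> < 1" "0 < \<mu>" "\<mu> < 1" "1 \<le> K"
    and "geo_beta \<alpha> \<mu> \<noteq> 1" and "x \<le> K"
  shows "predictability \<alpha> \<mu> K n L x = \<bar>geoPpow \<alpha> \<mu> K L x K - geo_pi \<alpha> \<mu> K K\<bar>
    \<and> predictability \<alpha> \<mu> K n L x =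
      \<bar>2 / real (K + 1) * geo_beta \<alpha> \<mu> powr ((real K - real x) / 2) *
        (\<Sum>k=1..K.
          (\<alpha> * \<mu> + (1 - \<alpha>) * (1 - \<mu>)
             + 2 * sqrt (\<alpha> * \<mu> * (1 - \<alpha>) * (1 - \<mu>)) * cos (real k * pi / real (K + 1))) ^ L
          / (1 - 2 * sqrt (geo_beta \<alpha> \<mu>) * cos (real k * pi / real (K + 1)) + geo_beta \<alpha> \<mu>)
          * (sin (real x * real k * pi / real (K + 1))
             - sqrt (geo_beta \<alpha> \<mu>) * sin ((real x + 1) * real k * pi / real (K + 1)))
          * sin (real K * real k * pi / real (K + 1)))\<bar>"
proof -
  have P1: "predictability \<alpha> \<mu> K n L x = \<bar>geoPpow \<alpha> \<mu> K L x K - geo_pi \<alpha> \<mu> K K\<bar>"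
    by (rule part1[OF assms])
  define b where "b = geo_beta \<alpha> \<mu>"
  define s where "s = sqrt b"
  define q where "q = \<mu> * (1 - \<alpha>)"
  have bp: "b > 0" unfolding b_def using beta_pos assms by blast
  have sp: "s > 0" unfolding s_def using bp by simp
  have s2: "s^2 = b" unfolding s_def using bp by simp
  have qp: "q > 0" unfolding q_def using assms by simp
  have bq: "b = \<alpha> * (1 - \<mu>) / q" unfolding b_def geo_beta_def q_def ..
  have qs: "q * s^2 = \<alpha> * (1 - \<mu>)" unfolding s2 bq using qp by simp
  have a: "\<alpha> * (1 - \<mu>) = \<mu> * (1 - \<alpha>) * s^2" using qs unfolding q_def by simp
  have sq: "sqrt (\<alpha> * \<mu> * (1 - \<alpha>) * (1 - \<mu>)) = \<mu> * (1 - \<alpha>) * s"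
  proof -
    have "\<alpha> * \<mu> * (1 - \<alpha>) * (1 - \<mu>) = (\<alpha> * (1 - \<mu>)) * (\<mu> * (1 - \<alpha>))"
      by (simp add: algebra_simps)
    also have "\<dots> = (\<mu> * (1 - \<alpha>))^2 * s^2" unfolding a by (simp add: power2_eq_square)
    finally have "\<alpha> * \<mu> * (1 - \<alpha>) * (1 - \<mu>) = (\<mu> * (1 - \<alpha>))^2 * s^2" .
    then show ?thesis using qp sp unfolding q_def by (simp add: real_sqrt_mult)
  qed
  define \<gamma> where "\<gamma> k = \<alpha> * \<mu> + (1 - \<alpha>) * (1 - \<mu>) + 2 * (\<mu> * (1 - \<alpha>) * s) * cos (th K k)" for k
  define w where "w l k = 2 / real (K + 1) * (\<gamma> k ^ l / NN s K k * sin (real K * th K k))" for l k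
  define F where "F l y = (\<Sum>k=1..K. w l k * (s^(K-y) * uu s K k y))" for l y
  define C where "C = (1 - b) / (1 - b ^ (K + 1))"
  have pi: "geo_pi \<alpha> \<mu> K y = C * b ^ y" for y unfolding geo_pi_def C_def b_def ..
  have Csum: "C * (\<Sum>i\<le>K. b^i) = 1"
    using geo_pi_sum[OF assms(1-4,6), of K] unfolding pi sum_distrib_left .
  have eigk: "(\<Sum>m\<le>K. geoP \<alpha> \<mu> K y m * (s^(K-m) * uu s K k m)) = \<gamma> k * (s^(K-y) * uu s K k y)"
    if "y \<le> K" for y k
    unfolding uu_def \<gamma>_def by (rule eig[OF assms(5) that th_end a])
  have main: "geoPpow \<alpha> \<mu> K l y K = geo_pi \<alpha> \<mu> K K + F l y" if "y \<le> K" for l y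
    using that
  proof (induction l arbitrary: y)
    case 0
    have "F 0 y = s^(K-y) * GG s K y"
      unfolding F_def w_def GG_def sum_distrib_left
      by (rule sum.cong[OF refl]) (simp add: algebra_simps)
    also have "\<dots> = (if y = K then 1 else 0) - b^K / (\<Sum>i\<le>K. b^i)"
      using base_ident[OF assms(5) 0] s2 by simp
    also have "b^K / (\<Sum>i\<le>K. b^i) = geo_pi \<alpha> \<mu> K K"
    proof -
      have "(\<Sum>i\<le>K. b^i) \<noteq> 0" using Csum by auto
      then show ?thesis unfolding pi using Csum by (simp add: field_simps)
    qed
    finally show ?case by simp
  next
    case (Suc l)
    have "geoPpow \<alpha> \<mu> K (Suc l) y K = (\<Sum>m\<le>K. geoP \<alpha> \<mu> K y m * (geo_pi \<alpha> \<mu> K K + F l m))"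
      unfolding geoPpow_left using Suc.IH by (intro sum.cong) auto
    also have "\<dots> = geo_pi \<alpha> \<mu> K K * (\<Sum>m\<le>K. geoP \<alpha> \<mu> K y m) + (\<Sum>m\<le>K. geoP \<alpha> \<mu> K y m * F l m)"
      by (simp add: distrib_left sum.distrib sum_distrib_left mult.commute)
    also have "(\<Sum>m\<le>K. geoP \<alpha> \<mu> K y m) = 1" by (rule geoP_rowsum[OF Suc.prems assms(5)])
    also have "(\<Sum>m\<le>K. geoP \<alpha> \<mu> K y m * F l m) = (\<Sum>m\<le>K. \<Sum>k=1..K. w l k * (geoP \<alpha> \<mu> K y m * (s^(K-m) * uu s K k m)))"
      unfolding F_def sum_distrib_left by (rule sum.cong[OF refl], rule sum.cong[OF refl]) (simp add: algebra_simps)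
    also have "\<dots> = (\<Sum>k=1..K. \<Sum>m\<le>K. w l k * (geoP \<alpha> \<mu> K y m * (s^(K-m) * uu s K k m)))"
      by (rule sum.swap)
    also have "\<dots> = (\<Sum>k=1..K. w l k * (\<gamma> k * (s^(K-y) * uu s K k y)))"
      by (simp only: sum_distrib_left[symmetric] eigk[OF Suc.prems])
    also have "\<dots> = F (Suc l) y"
      unfolding F_def w_def by (rule sum.cong[OF refl]) (simp add: algebra_simps)
    finally show ?case by simp
  qed
  have pw: "geo_beta \<alpha> \<mu> powr ((real K - real x) / 2) = s^(K-x)"
    unfolding s_def b_def[symmetric] using sqrt_pow_powr[OF bp, of "K-x"] assms(7) by (simp add: of_nat_diff)
  have "F L x = 2 / real (K + 1) * geo_beta \<alpha> \<mu> powr ((real K - real x) / 2) *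
        (\<Sum>k=1..K.
          (\<alpha> * \<mu> + (1 - \<alpha>) * (1 - \<mu>)
             + 2 * sqrt (\<alpha> * \<mu> * (1 - \<alpha>) * (1 - \<mu>)) * cos (real k * pi / real (K + 1))) ^ L
          / (1 - 2 * sqrt (geo_beta \<alpha> \<mu>) * cos (real k * pi / real (K + 1)) + geo_beta \<alpha> \<mu>)
          * (sin (real x * real k * pi / real (K + 1))
             - sqrt (geo_beta \<alpha> \<mu>) * sin ((real x + 1) * real k * pi / real (K + 1)))
          * sin (real K * real k * pi / real (K + 1)))"
  proof -
    have g: "\<And>k. \<alpha> * \<mu> + (1 - \<alpha>) * (1 - \<mu>) + 2 * sqrt (\<alpha> * \<mu> * (1 - \<alpha>) * (1 - \<mu>)) * cos (real k * pi / real (K + 1)) = \<gamma> k"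
      unfolding \<gamma>_def sq th_def ..
    have N: "\<And>k. 1 - 2 * sqrt (geo_beta \<alpha> \<mu>) * cos (real k * pi / real (K + 1)) + geo_beta \<alpha> \<mu> = NN s K k"
      unfolding NN_def s2 th_def b_def[symmetric] s_def[symmetric] by simp
    have U: "\<And>k. sin (real x * real k * pi / real (K + 1)) - sqrt (geo_beta \<alpha> \<mu>) * sin ((real x + 1) * real k * pi / real (K + 1)) = uu s K k x"
      unfolding uu_def th_def s_def b_def by (simp add: mult.assoc)
    have S: "\<And>k. sin (real K * real k * pi / real (K + 1)) = sin (real K * th K k)"
      unfolding th_def by (simp add: mult.assoc)
    show ?thesis
      unfolding pw F_def sum_distrib_left g N U S
      by (rule sum.cong[OF refl]) (simp add: w_def algebra_simps)
  qed
  then show ?thesis using P1 main[OF assms(7), of L] by simp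
qed


end
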